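(* Let $\alpha>-1$, $n\ge1$ an integer, and $L_n^{(\alpha)}(x)=\binom{n+\alpha}{n}\,{}_1F_1\!\left(\begin{matrix}-n\\ \alpha+1\end{matrix};x\right)$ the classical Laguerre polynomial. Define for $i=0,1,2,\ldots$ $$b_i^*(\alpha,x)=\frac{1}{i!}\sum_{j=0}^i(-1)^j\binom{i}{j}(\alpha+1)_{i-j}x^j,\qquad c_i^*(\alpha,x)=\frac{(-1)^i}{i!}x^i .$$ Then, with $D=d/dx$, for $k=0,1,2$: $$\sum_{i=0}^\infty b_i^*(\alpha,x)D^{i+k}L_n^{(\alpha)}(x)=\frac{(-n)_k}{n\,\Gamma(k)}\quad(\text{i.e. }0,\,-1,\,n-1\text{ for }k=0,1,2),$$ and $$\sum_{i=0}^\infty c_i^*(\alpha,x)D^{i+k}L_n^{(\alpha)}(x)=\binom{n+\alpha}{n}\frac{(-n)_k}{(\alpha+1)_k}.$$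
   Context: $(a)_k$ is the Pochhammer symbol ($(a)_0=1$, $(a)_k=a(a+1)\cdots(a+k-1)$), $\binom{\gamma}{m}$ the generalized binomial coefficient, ${}_1F_1$ the confluent hypergeometric series $\sum_k\frac{(a)_k}{(b)_k}\frac{z^k}{k!}$. $1/\Gamma(0)$ is interpreted as $0$. The sums are finite since $L_n^{(\alpha)}$ is a polynomial of degree $n$. *)

theory Defs
  imports "HOL-Analysis.Analysis" "HOL-Computational_Algebra.Polynomial"
begin

text \<open>Terms of the confluent hypergeometric series 1F1(a;b;z) = sum_k (a)_k/(b)_k z^k/k!.
  For a = -n the terms with k > n vanish, so the series is the polynomial below.\<close>

definition laguerre_poly :: "nat \<Rightarrow> real \<Rightarrow> real poly" where
  "laguerre_poly n \<alpha> =
     smult ((real n + \<alpha>) gchoose n)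
       (\<Sum>k\<le>n. monom (pochhammer (- real n) k / (pochhammer (\<alpha> + 1) k * fact k)) k)"

definition b_star :: "nat \<Rightarrow> real \<Rightarrow> real \<Rightarrow> real" where
  "b_star i \<alpha> x = (1 / fact i) *
     (\<Sum>j\<le>i. (-1) ^ j * real (i choose j) * pochhammer (\<alpha> + 1) (i - j) * x ^ j)"

definition c_star :: "nat \<Rightarrow> real \<Rightarrow> real \<Rightarrow> real" where
  "c_star i \<alpha> x = (-1) ^ i / fact i * x ^ i"

end

theory Submission
  imports Defs
begin

definition Bp :: "real \<Rightarrow> nat \<Rightarrow> real poly" where
  "Bp a i = smult (1 / fact i) (\<Sum>j\<le>i. monom ((-1)^j * real (i choose j) * pochhammer a (i - j)) j)"

lemma coeff_Bp: "coeff (Bp a i) j = (1 / fact i) * ((-1)^j * real (i choose j) * pochhammer a (i - j))"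
  by (simp add: Bp_def coeff_sum coeff_monom)

lemma pderiv_Bp_Suc: "pderiv (Bp a (Suc i)) = - Bp a i"
proof (rule poly_eqI)
  fix j
  have e: "real (Suc j) * real (Suc i choose Suc j) = real (Suc i) * real (i choose j)"
    by (metis Suc_times_binomial_eq mult.commute of_nat_mult)
  show "coeff (pderiv (Bp a (Suc i))) j = coeff (- Bp a i) j"
  proof -
    have "coeff (pderiv (Bp a (Suc i))) j = real (Suc j) * real (Suc i choose Suc j) * (1 / fact (Suc i) * ((-1)^Suc j * pochhammer a (i - j)))"
      unfolding coeff_pderiv coeff_Bp by (simp del: binomial_Suc_Suc of_nat_Suc)
    also have "\<dots> = real (Suc i) * real (i choose j) * (1 / fact (Suc i) * ((-1)^Suc j * pochhammer a (i - j)))"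
      by (simp only: e)
    also have "\<dots> = coeff (- Bp a i) j"
      unfolding coeff_minus coeff_Bp by (simp add: fact_Suc field_simps del: of_nat_Suc)
    finally show ?thesis .
  qed
qed

lemma pderiv_Bp_0: "pderiv (Bp a 0) = 0"
  by (simp add: Bp_def)

lemma poly_Bp: "poly (Bp (\<alpha>+1) i) x = b_star i \<alpha> x"
  by (simp add: Bp_def b_star_def poly_sum poly_monom sum_distrib_left)

lemma poch0: "m > 0 \<Longrightarrow> pochhammer (0::real) m = 0"
  by (subst pochhammer_eq_0_iff) auto

lemma poly_Bp0: "poly (Bp 0 i) x = c_star i \<alpha> x"
proof -
  have "(\<Sum>j\<le>i. (-1)^j * real (i choose j) * pochhammer 0 (i - j) * x^j) = (-1)^i * x^i"
    by (subst sum.remove[of _ i]) (auto simp: poch0 intro!: sum.neutral)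
  then show ?thesis by (simp add: Bp_def c_star_def poly_sum poly_monom sum_distrib_left)
qed

lemma poly_Bp_0: "poly (Bp a i) 0 = pochhammer a i / fact i"
proof -
  have "(\<Sum>j\<le>i. (-1)^j * real (i choose j) * pochhammer a (i - j) * (0::real)^j) = pochhammer a i"
    by (subst sum.remove[of _ 0]) (auto intro!: sum.neutral)
  then show ?thesis by (simp add: Bp_def poly_sum poly_monom)
qed

lemma pderiv_G: "pderiv (\<Sum>i<Suc N. Bp a i * (pderiv^^i) p) = Bp a N * (pderiv^^(Suc N)) p"
proof (induction N)
  case 0
  then show ?case by (simp add: pderiv_mult pderiv_Bp_0)
next
  case (Suc N)
  have "pderiv (\<Sum>i<Suc (Suc N). Bp a i * (pderiv^^i) p)
     = pderiv (\<Sum>i<Suc N. Bp a i * (pderiv^^i) p) + pderiv (Bp a (Suc N) * (pderiv^^(Suc N)) p)"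
    by (simp add: pderiv_add)
  also have "\<dots> = Bp a (Suc N) * (pderiv^^(Suc (Suc N))) p"
    unfolding Suc pderiv_mult pderiv_Bp_Suc by (simp add: algebra_simps)
  finally show ?case .
qed

lemma degree_iter: "degree ((pderiv^^m) (p::real poly)) = degree p - m"
  by (induction m) (auto simp: degree_pderiv)

lemma iter_zero: assumes "degree (p::real poly) < N" shows "(pderiv^^N) p = 0"
proof -
  obtain M where N: "N = Suc M" using assms by (cases N) auto
  have "degree ((pderiv^^M) p) = 0" using assms N by (simp add: degree_iter)
  then show ?thesis using N by (simp add: pderiv_eq_0_iff)
qed

lemma coeff_iter: "coeff ((pderiv^^j) p) n = pochhammer (real n + 1) j * coeff (p::real poly) (n + j)"
proof (induction j arbitrary: n)
  case 0 then show ?case by simp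
next
  case (Suc j)
  show ?case by (simp add: coeff_pderiv Suc pochhammer_rec add_ac)
qed

lemma poly_iter_0: "poly ((pderiv^^j) p) 0 = fact j * coeff (p::real poly) j"
  by (simp add: poly_0_coeff_0 coeff_iter pochhammer_fact)

lemma key:
  assumes "degree (p::real poly) < N"
  shows "poly (\<Sum>i<N. Bp a i * (pderiv^^i) p) x = (\<Sum>i<N. pochhammer a i / fact i * poly ((pderiv^^i) p) 0)"
proof -
  obtain M where N: "N = Suc M" using assms by (cases N) auto
  define G where "G = (\<Sum>i<N. Bp a i * (pderiv^^i) p)"
  have "pderiv G = 0" unfolding G_def N pderiv_G using iter_zero[OF assms] N by simp
  then have "degree G = 0" by (simp add: pderiv_eq_0_iff)
  then obtain c where "G = [:c:]" using degree0_coeffs by blast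
  then have "poly G x = poly G 0" by simp
  also have "\<dots> = (\<Sum>i<N. pochhammer a i / fact i * poly ((pderiv^^i) p) 0)"
    unfolding G_def by (simp add: poly_sum poly_Bp_0)
  finally show ?thesis unfolding G_def .
qed

lemma S_eq:
  assumes "a > 0"
  shows "(\<Sum>m\<le>N. (-1)^m * real (N choose m) / (a + real m)) = fact N / pochhammer a (Suc N)"
  using assms
proof (induction N arbitrary: a)
  case 0
  then show ?case by simp
next
  case (Suc N)
  define g where "g m = (-1)^m * real (N choose m) / (a + real m)" for m
  have IH1: "(\<Sum>m\<le>N. g m) = fact N / pochhammer a (Suc N)" using Suc g_def by simp
  have IH2: "(\<Sum>m\<le>N. (-1)^m * real (N choose m) / ((a + 1) + real m)) = fact N / pochhammer (a+1) (Suc N)"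
    using Suc by simp
  have "(\<Sum>m\<le>Suc N. (-1)^m * real (Suc N choose m) / (a + real m))
      = 1 / a + (\<Sum>m\<le>N. (-1)^(Suc m) * real (Suc N choose Suc m) / (a + real (Suc m)))"
    by (subst sum.atMost_Suc_shift) simp
  also have "(\<Sum>m\<le>N. (-1)^(Suc m) * real (Suc N choose Suc m) / (a + real (Suc m)))
     = (\<Sum>m\<le>N. g (Suc m)) - (\<Sum>m\<le>N. (-1)^m * real (N choose m) / ((a + 1) + real m))"
    unfolding g_def sum_subtractf[symmetric]
  proof (rule sum.cong)
    fix m assume "m \<in> {..N}"
    have d: "1 + (a + real m) \<noteq> 0" "a + (1 + real m) \<noteq> 0" "a + 1 + real m \<noteq> 0" using Suc.prems by (simp_all add: add_pos_nonneg)
    show "(-1)^(Suc m) * real (Suc N choose Suc m) / (a + real (Suc m)) =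
      (-1)^(Suc m) * real (N choose Suc m) / (a + real (Suc m)) - (-1)^m * real (N choose m) / ((a + 1) + real m)"
    proof -
      have e1: "(a + 1) + real m = a + real (Suc m)" by simp
      have e2: "real (Suc N choose Suc m) = real (N choose m) + real (N choose Suc m)" by simp
      show ?thesis unfolding e1 e2 diff_divide_distrib[symmetric]
        by (rule arg_cong[where f="\<lambda>t. t / (a + real (Suc m))"]) (simp add: algebra_simps)
    qed
  qed simp
  also have "(\<Sum>m\<le>N. g (Suc m)) = (\<Sum>m\<le>Suc N. g m) - g 0"
    by (subst sum.atMost_Suc_shift) simp
  also have "(\<Sum>m\<le>Suc N. g m) = (\<Sum>m\<le>N. g m)"
    by (simp add: g_def)
  also have "g 0 = 1 / a" by (simp add: g_def)
  finally have "(\<Sum>m\<le>Suc N. (-1)^m * real (Suc N choose m) / (a + real m))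
     = fact N / pochhammer a (Suc N) - fact N / pochhammer (a+1) (Suc N)"
    using IH1 IH2 by simp
  also have "\<dots> = fact (Suc N) / pochhammer a (Suc (Suc N))"
  proof -
    have p1: "pochhammer a (Suc (Suc N)) = a * pochhammer (a+1) (Suc N)" by (rule pochhammer_rec)
    have p2: "pochhammer a (Suc (Suc N)) = (a + real (Suc N)) * pochhammer a (Suc N)" by (rule pochhammer_rec')
    have nz1: "pochhammer a (Suc N) \<noteq> 0" using Suc.prems by (auto simp: pochhammer_eq_0_iff)
    have nz2: "pochhammer (a+1) (Suc N) \<noteq> 0" using Suc.prems by (auto simp: pochhammer_eq_0_iff)
    have nz: "pochhammer a (Suc (Suc N)) \<noteq> 0" using Suc.prems by (auto simp: pochhammer_eq_0_iff)
    have "fact N / pochhammer a (Suc N) = fact N * (a + real (Suc N)) / pochhammer a (Suc (Suc N))"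
    proof -
      have dnz: "a + real (Suc N) \<noteq> 0" using Suc.prems by (simp add: add_pos_nonneg)
      show ?thesis unfolding p2 using nz1 dnz by simp
    qed
    moreover have "fact N / pochhammer (a+1) (Suc N) = fact N * a / pochhammer a (Suc (Suc N))"
      unfolding p1 using nz2 Suc.prems by simp
    ultimately show ?thesis by (simp add: diff_divide_distrib[symmetric] algebra_simps fact_Suc)
  qed
  finally show ?case .
qed

lemma S_ext:
  assumes "a > 0" "N \<le> M"
  shows "(\<Sum>m\<le>M. (-1)^m * real (N choose m) / (a + real m)) = fact N / pochhammer a (Suc N)"
proof -
  have "(\<Sum>m\<le>M. (-1)^m * real (N choose m) / (a + real m)) = (\<Sum>m\<le>N. (-1)^m * real (N choose m) / (a + real m))"
    using assms(2) by (intro sum.mono_neutral_right) auto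
  then show ?thesis using S_eq[OF assms(1)] by simp
qed

lemma poch_choose: "pochhammer (- real N) m / fact m = (-1)^m * real (N choose m)"
  by (simp add: binomial_gbinomial gbinomial_pochhammer)

lemma S_diff:
  fixes a :: real
  assumes "a > 0"
  shows "fact N / pochhammer a (Suc N) - fact N / pochhammer (a+1) (Suc N) = fact (Suc N) / pochhammer a (Suc (Suc N))"
proof -
  have p1: "pochhammer a (Suc (Suc N)) = a * pochhammer (a+1) (Suc N)" by (rule pochhammer_rec)
  have p2: "pochhammer a (Suc (Suc N)) = (a + real (Suc N)) * pochhammer a (Suc N)" by (rule pochhammer_rec')
  have nz1: "pochhammer a (Suc N) \<noteq> 0" using assms by (auto simp: pochhammer_eq_0_iff)
  have nz2: "pochhammer (a+1) (Suc N) \<noteq> 0" using assms by (auto simp: pochhammer_eq_0_iff)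
  have "fact N / pochhammer a (Suc N) = fact N * (a + real (Suc N)) / pochhammer a (Suc (Suc N))"
  proof -
    have dnz: "a + real (Suc N) \<noteq> 0" using assms by (simp add: add_pos_nonneg)
    show ?thesis unfolding p2 using nz1 dnz by simp
  qed
  moreover have "fact N / pochhammer (a+1) (Suc N) = fact N * a / pochhammer a (Suc (Suc N))"
    unfolding p1 using nz2 assms by simp
  ultimately show ?thesis by (simp add: diff_divide_distrib[symmetric] algebra_simps fact_Suc)
qed

lemma coeff_L:
  "coeff (laguerre_poly n \<alpha>) j = ((real n + \<alpha>) gchoose n) * (pochhammer (- real n) j / (pochhammer (\<alpha> + 1) j * fact j))"
proof (cases "j \<le> n")
  case True
  then show ?thesis by (simp add: laguerre_poly_def coeff_sum coeff_monom)
next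
  case False
  then have "pochhammer (- real n) j = 0" by (auto simp: pochhammer_eq_0_iff)
  then show ?thesis using False by (simp add: laguerre_poly_def coeff_sum coeff_monom)
qed

lemma degree_L: "degree (laguerre_poly n \<alpha>) \<le> n"
proof (rule degree_le, intro allI impI)
  fix i assume "n < i"
  then have "pochhammer (- real n) i = 0" by (auto simp: pochhammer_eq_0_iff)
  then show "coeff (laguerre_poly n \<alpha>) i = 0" by (simp add: coeff_L)
qed

lemma poly_DL0:
  assumes "\<alpha> > -1"
  shows "poly ((pderiv^^j) (laguerre_poly n \<alpha>)) 0 = ((real n + \<alpha>) gchoose n) * pochhammer (- real n) j / pochhammer (\<alpha> + 1) j"
proof -
  have "pochhammer (\<alpha> + 1) j \<noteq> 0" using assms by (auto simp: pochhammer_eq_0_iff)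
  then show ?thesis by (simp add: poly_iter_0 coeff_L)
qed

lemma gen_sum:
  assumes "\<alpha> > -1"
  shows "(\<Sum>i. poly (Bp A i) x * poly ((pderiv ^^ (i + k)) (laguerre_poly n \<alpha>)) x)
     = (\<Sum>i<Suc n. pochhammer A i / fact i * (((real n + \<alpha>) gchoose n) * pochhammer (- real n) (i + k) / pochhammer (\<alpha> + 1) (i + k)))"
proof -
  let ?L = "laguerre_poly n \<alpha>"
  let ?p = "(pderiv^^k) ?L"
  have fa: "(pderiv ^^ (i + k)) ?L = (pderiv^^i) ?p" for i by (simp add: funpow_add)
  have "(\<Sum>i. poly (Bp A i) x * poly ((pderiv ^^ (i + k)) ?L) x)
      = (\<Sum>i<Suc n. poly (Bp A i) x * poly ((pderiv ^^ (i + k)) ?L) x)"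
  proof (rule suminf_finite)
    fix i assume "i \<notin> {..<Suc n}"
    then have "degree ?L < i + k" using degree_L[of n \<alpha>] by simp
    then show "poly (Bp A i) x * poly ((pderiv ^^ (i + k)) ?L) x = 0" by (simp add: iter_zero)
  qed simp
  also have "\<dots> = poly (\<Sum>i<Suc n. Bp A i * (pderiv^^i) ?p) x"
    by (simp add: poly_sum fa)
  also have "\<dots> = (\<Sum>i<Suc n. pochhammer A i / fact i * poly ((pderiv^^i) ?p) 0)"
  proof (rule key)
    show "degree ?p < Suc n" using degree_L[of n \<alpha>] by (simp add: degree_iter)
  qed
  also have "\<dots> = (\<Sum>i<Suc n. pochhammer A i / fact i * (((real n + \<alpha>) gchoose n) * pochhammer (- real n) (i + k) / pochhammer (\<alpha> + 1) (i + k)))"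
    by (simp add: fa[symmetric] poly_DL0[OF assms])
  finally show ?thesis .
qed

lemma csum:
  "(\<Sum>i<Suc n. pochhammer 0 i / fact i * T i) = (T 0 :: real)"
proof -
  have "(\<Sum>i<Suc n. pochhammer 0 i / fact i * T i) = pochhammer 0 0 / fact 0 * T 0 + (\<Sum>i<n. pochhammer 0 (Suc i) / fact (Suc i) * T (Suc i))"
    by (rule sum.lessThan_Suc_shift)
  also have "(\<Sum>i<n. pochhammer (0::real) (Suc i) / fact (Suc i) * T (Suc i)) = 0"
    by (intro sum.neutral) (simp add: poch0)
  finally show ?thesis by simp
qed

lemma bsum0:
  assumes "\<alpha> > -1" "n \<ge> 1"
  shows "(\<Sum>i<Suc n. pochhammer (\<alpha>+1) i / fact i * (C * pochhammer (- real n) (i + 0) / pochhammer (\<alpha> + 1) (i + 0))) = 0"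
proof -
  have "(\<Sum>i<Suc n. pochhammer (\<alpha>+1) i / fact i * (C * pochhammer (- real n) (i + 0) / pochhammer (\<alpha> + 1) (i + 0)))
      = (\<Sum>i\<le>n. C * ((-1)^i * real (n choose i)))"
    unfolding lessThan_Suc_atMost
  proof (rule sum.cong)
    fix i assume "i \<in> {..n}"
    have nz: "pochhammer (\<alpha>+1) i \<noteq> 0" using assms by (auto simp: pochhammer_eq_0_iff)
    have "pochhammer (\<alpha>+1) i / fact i * (C * pochhammer (- real n) (i + 0) / pochhammer (\<alpha> + 1) (i + 0))
        = C * (pochhammer (- real n) i / fact i)" using nz by simp
    then show "pochhammer (\<alpha>+1) i / fact i * (C * pochhammer (- real n) (i + 0) / pochhammer (\<alpha> + 1) (i + 0))
        = C * ((-1)^i * real (n choose i))" by (simp only: poch_choose)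
  qed simp
  also have "\<dots> = C * (\<Sum>i\<le>n. (-1)^i * real (n choose i))" by (simp add: sum_distrib_left)
  also have "(\<Sum>i\<le>n. (-1)^i * real (n choose i)) = 0" using assms by (simp add: choose_alternating_sum)
  finally show ?thesis by simp
qed

lemma c_val: "\<alpha> > -1 \<Longrightarrow> ((real n + \<alpha>) gchoose n) = pochhammer (\<alpha>+1) n / fact n"
  by (simp add: gbinomial_pochhammer' add_ac)

lemma aux1: "(P::real) \<noteq> 0 \<Longrightarrow> P / F * (X / (D * P)) = (X / F) / D"
  by (cases "F = 0"; cases "D = 0") (simp_all add: field_simps)

lemma bsum1:
  assumes "\<alpha> > -1" "n \<ge> 1"
  shows "(\<Sum>i<Suc n. pochhammer (\<alpha>+1) i / fact i * (((real n + \<alpha>) gchoose n) * pochhammer (- real n) (i + 1) / pochhammer (\<alpha> + 1) (i + 1))) = -1"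
proof -
  define a where "a = \<alpha> + 1"
  have a: "a > 0" using assms by (simp add: a_def)
  define C where "C = (real n + \<alpha>) gchoose n"
  have "(\<Sum>i<Suc n. pochhammer a i / fact i * (C * pochhammer (- real n) (i + 1) / pochhammer a (i + 1)))
      = (\<Sum>i\<le>n. (C * (- real n)) * ((-1)^i * real ((n - 1) choose i) / (a + real i)))"
    unfolding lessThan_Suc_atMost
  proof (rule sum.cong)
    fix i assume "i \<in> {..n}"
    have nz: "pochhammer a i \<noteq> 0" using a by (auto simp: pochhammer_eq_0_iff)
    have p1: "pochhammer a (i + 1) = (a + real i) * pochhammer a i" using pochhammer_rec'[of a i] by simp
    have p2: "pochhammer (- real n) (i + 1) = (- real n) * pochhammer (- real (n - 1)) i"
      using pochhammer_rec[of "- real n" i] assms by (simp add: of_nat_diff)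
    have d: "a + real i \<noteq> 0" using a by (simp add: add_pos_nonneg)
    have d2: "a * fact i + fact i * real i \<noteq> 0"
    proof -
      have "a * fact i + fact i * real i = (a + real i) * fact i" by (simp add: algebra_simps)
      then show ?thesis using d by simp
    qed
    have "pochhammer a i / fact i * (C * pochhammer (- real n) (i + 1) / pochhammer a (i + 1))
       = (C * (- real n)) * ((pochhammer (- real (n - 1)) i / fact i) / (a + real i))"
      unfolding p1 p2 using nz by (simp add: aux1)
    then show "pochhammer a i / fact i * (C * pochhammer (- real n) (i + 1) / pochhammer a (i + 1))
       = (C * (- real n)) * ((-1)^i * real ((n - 1) choose i) / (a + real i))" by (simp only: poch_choose)
  qed simp
  also have "\<dots> = (C * (- real n)) * (fact (n - 1) / pochhammer a (Suc (n - 1)))"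
    by (simp only: sum_distrib_left[symmetric] S_ext[OF a] diff_le_self)
  also have "\<dots> = -1"
  proof -
    have sn: "Suc (n - 1) = n" using assms by simp
    have nz: "pochhammer a n \<noteq> 0" using a by (auto simp: pochhammer_eq_0_iff)
    have f: "fact n = real n * fact (n - 1)" using assms by (metis fact_nonzero fact_num_eq_if of_nat_eq_0_iff  not_one_le_zero)
    show ?thesis unfolding sn C_def c_val[OF assms(1)] a_def[symmetric] using nz f assms(2) by (simp add: field_simps)
  qed
  finally show ?thesis unfolding a_def C_def .
qed

lemma aux2: "(d::real) > 0 \<Longrightarrow> Y / (d * (d + 1)) = Y / d - Y / (d + 1)"
  by (simp add: field_simps)

lemma bsum2:
  assumes "\<alpha> > -1" "n \<ge> 1"
  shows "(\<Sum>i<Suc n. pochhammer (\<alpha>+1) i / fact i * (((real n + \<alpha>) gchoose n) * pochhammer (- real n) (i + 2) / pochhammer (\<alpha> + 1) (i + 2))) = real n - 1"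
proof (cases "n = 1")
  case True
  have "pochhammer (- real n) (i + 2) = 0" for i
    using True by (auto simp: pochhammer_eq_0_iff intro!: exI[of _ 1])
  then show ?thesis using True by simp
next
  case False
  then have n2: "n \<ge> 2" using assms by simp
  define a where "a = \<alpha> + 1"
  have a: "a > 0" using assms by (simp add: a_def)
  define C where "C = (real n + \<alpha>) gchoose n"
  define K where "K = C * (real n * (real n - 1))"
  define g where "g b i = (-1)^i * real ((n - 2) choose i) / (b + real i)" for b i
  have "(\<Sum>i<Suc n. pochhammer a i / fact i * (C * pochhammer (- real n) (i + 2) / pochhammer a (i + 2)))
      = (\<Sum>i\<le>n. K * g a i - K * g (a + 1) i)"
    unfolding lessThan_Suc_atMost
  proof (rule sum.cong)
    fix i assume "i \<in> {..n}"
    have nz: "pochhammer a i \<noteq> 0" using a by (auto simp: pochhammer_eq_0_iff)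
    have p1: "pochhammer a (i + 2) = ((a + real i) * (a + real i + 1)) * pochhammer a i"
      using pochhammer_rec'[of a "Suc i"] pochhammer_rec'[of a i] by (simp add: algebra_simps)
    have p2: "pochhammer (- real n) (i + 2) = (real n * (real n - 1)) * pochhammer (- real (n - 2)) i"
    proof -
      have h1: "pochhammer (- real n) (Suc (Suc i)) = (- real n) * pochhammer (- real n + 1) (Suc i)"
        by (rule pochhammer_rec)
      have h2: "pochhammer (- real n + 1) (Suc i) = (- real n + 1) * pochhammer (- real n + 1 + 1) i"
        by (rule pochhammer_rec)
      have h3: "- real n + 1 + 1 = - real (n - 2)" using n2 by (simp add: of_nat_diff)
      have "pochhammer (- real n) (i + 2) = (- real n) * ((- real n + 1) * pochhammer (- real (n - 2)) i)"
        unfolding add_2_eq_Suc' h1 h2 h3 ..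
      then show ?thesis by (simp add: algebra_simps)
    qed
    have dpos: "a + real i > 0" using a by (simp add: add_pos_nonneg)
    have "pochhammer a i / fact i * (C * pochhammer (- real n) (i + 2) / pochhammer a (i + 2))
       = (K * (pochhammer (- real (n - 2)) i / fact i)) / ((a + real i) * (a + real i + 1))"
      unfolding p1 p2 aux1[OF nz] by (simp add: K_def mult.assoc)
    also have "\<dots> = K * ((pochhammer (- real (n - 2)) i / fact i) / (a + real i)) - K * ((pochhammer (- real (n - 2)) i / fact i) / ((a + 1) + real i))"
      unfolding aux2[OF dpos] by (simp add: add_ac right_diff_distrib)
    also have "\<dots> = K * g a i - K * g (a + 1) i"
      unfolding g_def poch_choose by simp
    finally show "pochhammer a i / fact i * (C * pochhammer (- real n) (i + 2) / pochhammer a (i + 2)) = K * g a i - K * g (a + 1) i" .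
  qed simp
  also have "\<dots> = K * ((\<Sum>i\<le>n. g a i) - (\<Sum>i\<le>n. g (a + 1) i))"
    by (simp add: sum_subtractf sum_distrib_left right_diff_distrib)
  also have "(\<Sum>i\<le>n. g a i) = fact (n - 2) / pochhammer a (Suc (n - 2))"
    unfolding g_def by (rule S_ext[OF a]) simp
  also have "(\<Sum>i\<le>n. g (a + 1) i) = fact (n - 2) / pochhammer (a + 1) (Suc (n - 2))"
    unfolding g_def using a by (intro S_ext) simp_all
  also have "fact (n - 2) / pochhammer a (Suc (n - 2)) - fact (n - 2) / pochhammer (a + 1) (Suc (n - 2))
      = fact (Suc (n - 2)) / pochhammer a (Suc (Suc (n - 2)))"
    by (rule S_diff[OF a])
  also have "K * (fact (Suc (n - 2)) / pochhammer a (Suc (Suc (n - 2)))) = real n - 1"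
  proof -
    have sn: "Suc (Suc (n - 2)) = n" "Suc (n - 2) = n - 1" using n2 by simp_all
    have nz: "pochhammer a n \<noteq> 0" using a by (auto simp: pochhammer_eq_0_iff)
    have f: "fact n = real n * fact (n - 1)" using n2 by (simp add: fact_reduce)
    show ?thesis unfolding sn K_def C_def c_val[OF assms(1)] a_def[symmetric] using nz f n2 by (simp add: field_simps)
  qed
  finally show ?thesis unfolding a_def C_def .
qed

lemma rGamma_2: "rGamma 2 = 1"
  using rGamma_plus1[of 1] by (simp add: one_add_one)

theorem mainTheorem2:
  fixes \<alpha> x :: real and n k :: nat
  assumes "\<alpha> > -1" and "n \<ge> 1" and "k \<le> 2"
  shows "(\<Sum>i. b_star i \<alpha> x * poly ((pderiv ^^ (i + k)) (laguerre_poly n \<alpha>)) x)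
           = pochhammer (- real n) k * rGamma (real k) / real n
         \<and> (\<Sum>i. c_star i \<alpha> x * poly ((pderiv ^^ (i + k)) (laguerre_poly n \<alpha>)) x)
           = ((real n + \<alpha>) gchoose n) * pochhammer (- real n) k / pochhammer (\<alpha> + 1) k"
proof
  let ?C = "(real n + \<alpha>) gchoose n"
  have b: "(\<Sum>i. b_star i \<alpha> x * poly ((pderiv ^^ (i + k)) (laguerre_poly n \<alpha>)) x)
     = (\<Sum>i<Suc n. pochhammer (\<alpha>+1) i / fact i * (?C * pochhammer (- real n) (i + k) / pochhammer (\<alpha> + 1) (i + k)))"
    using gen_sum[OF assms(1), of "\<alpha>+1" x k] unfolding poly_Bp .
  have c: "(\<Sum>i. c_star i \<alpha> x * poly ((pderiv ^^ (i + k)) (laguerre_poly n \<alpha>)) x)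
     = (\<Sum>i<Suc n. pochhammer 0 i / fact i * (?C * pochhammer (- real n) (i + k) / pochhammer (\<alpha> + 1) (i + k)))"
    using gen_sum[OF assms(1), of 0 x k] unfolding poly_Bp0[of _ _ \<alpha>] .
  show "(\<Sum>i. c_star i \<alpha> x * poly ((pderiv ^^ (i + k)) (laguerre_poly n \<alpha>)) x)
           = ?C * pochhammer (- real n) k / pochhammer (\<alpha> + 1) k"
    unfolding c csum by simp
  have k: "k = 0 \<or> k = 1 \<or> k = 2" using assms(3) by auto
  have "(\<Sum>i<Suc n. pochhammer (\<alpha>+1) i / fact i * (?C * pochhammer (- real n) (i + k) / pochhammer (\<alpha> + 1) (i + k)))
           = pochhammer (- real n) k * rGamma (real k) / real n"
  proof -
    { assume "k = 0"
      then have ?thesis using bsum0[OF assms(1,2), of ?C] by simp }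
    moreover
    { assume "k = 1"
      then have ?thesis using bsum1[OF assms(1,2)] assms(2) by simp }
    moreover
    { assume k2: "k = 2"
      have "pochhammer (- real n) 2 = (- real n) * (- real n + 1)"
        by (simp add: numeral_2_eq_2 pochhammer_Suc)
      then have "pochhammer (- real n) 2 * rGamma (real 2) / real n = real n - 1"
        using assms(2) by (simp add: rGamma_2 field_simps)
      then have ?thesis using bsum2[OF assms(1,2)] k2 by simp }
    ultimately show ?thesis using k by blast
  qed
  then show "(\<Sum>i. b_star i \<alpha> x * poly ((pderiv ^^ (i + k)) (laguerre_poly n \<alpha>)) x)
           = pochhammer (- real n) k * rGamma (real k) / real n"
    by (simp only: b)
qed

end
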